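(* Let $N=(P,T,F,I,O)$ be a pWF net such that no output place has an outgoing edge, i.e. $p\bullet=\emptyset$ for all $p\in O$. Then $N$ is $*$-sound if and only if $N$ is sub-sound.
   Context: Petri nets and markings. A Petri net is a triple $(P,T,F)$ with $P$ a finite set of places, $T$ a finite set of transitions, $P\cap T=\emptyset$, and $F\subseteq (P\times T)\cup(T\times P)$. For a node $x$, $\bullet x=\{y\mid (y,x)\in F\}$, $x\bullet=\{y\mid (x,y)\in F\}$. A marking is a multiset over $P$ (a function $P\to\mathbb N$); sets of places are identified with bags of multiplicity one, $+,-,\le$ are pointwise, and $k.m$ is the sum of $k$ copies of $m$. Transition $t$ is enabled at $m$ iff $\bullet t\le m$, firing gives $m-\bullet t+t\bullet$, and $m\xrightarrow{*}m'$ denotes reachability by a finite (possibly empty) firing sequence. A pWF net is $(P,T,F,I,O)$ with $(P,T,F)$ a Petri net, $I,O\subseteq P$ non-empty, every node reachable by a directed path from some node of $I$, and some node of $O$ reachable from every node. Soundness. A pWF net is $k$-sound if for every marking $m$ with $k.I\xrightarrow{*}m$ we have $m\xrightarrow{*}k.O$; $*$-sound if $k$-sound for all $k\ge1$. It is substitution-sound (sub-sound) if for all integers $k\ge k'\ge 0$ and every marking $m'$: if $k.I\xrightarrow{*}m'+k'.O$ then $m'\xrightarrow{*}(k-k').O$. *)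

theory Defs
  imports Main "HOL-Library.Multiset"
begin

datatype ('p, 't) node = Place 'p | Trans 't

definition preset :: "('p, 't) node rel \<Rightarrow> 't \<Rightarrow> 'p multiset" where
  "preset F t = mset_set {p. (Place p, Trans t) \<in> F}"

definition postset :: "('p, 't) node rel \<Rightarrow> 't \<Rightarrow> 'p multiset" where
  "postset F t = mset_set {p. (Trans t, Place p) \<in> F}"

definition fire_step :: "'t set \<Rightarrow> ('p, 't) node rel \<Rightarrow> 'p multiset \<Rightarrow> 'p multiset \<Rightarrow> bool" where
  "fire_step T F m m' \<longleftrightarrow>
     (\<exists>t\<in>T. preset F t \<subseteq># m \<and> m' = m - preset F t + postset F t)"

definition reach :: "'t set \<Rightarrow> ('p, 't) node rel \<Rightarrow> 'p multiset \<Rightarrow> 'p multiset \<Rightarrow> bool" where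
  "reach T F = (fire_step T F)\<^sup>*\<^sup>*"

definition kcopies :: "nat \<Rightarrow> 'p set \<Rightarrow> 'p multiset" where
  "kcopies k A = repeat_mset k (mset_set A)"

definition nodes :: "'p set \<Rightarrow> 't set \<Rightarrow> ('p, 't) node set" where
  "nodes P T = Place ` P \<union> Trans ` T"

definition petri_net :: "'p set \<Rightarrow> 't set \<Rightarrow> ('p, 't) node rel \<Rightarrow> bool" where
  "petri_net P T F \<longleftrightarrow> finite P \<and> finite T \<and>
     F \<subseteq> (Place ` P \<times> Trans ` T) \<union> (Trans ` T \<times> Place ` P)"

definition pWF :: "'p set \<Rightarrow> 't set \<Rightarrow> ('p, 't) node rel \<Rightarrow> 'p set \<Rightarrow> 'p set \<Rightarrow> bool" where
  "pWF P T F In Out \<longleftrightarrow> petri_net P T F \<and>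
     In \<subseteq> P \<and> In \<noteq> {} \<and> Out \<subseteq> P \<and> Out \<noteq> {} \<and>
     (\<forall>x\<in>nodes P T. \<exists>i\<in>In. (Place i, x) \<in> F\<^sup>*) \<and>
     (\<forall>x\<in>nodes P T. \<exists>q\<in>Out. (x, Place q) \<in> F\<^sup>*)"

definition k_sound :: "nat \<Rightarrow> 'p set \<Rightarrow> 't set \<Rightarrow> ('p, 't) node rel \<Rightarrow> 'p set \<Rightarrow> 'p set \<Rightarrow> bool" where
  "k_sound k P T F In Out \<longleftrightarrow>
     (\<forall>m. reach T F (kcopies k In) m \<longrightarrow> reach T F m (kcopies k Out))"

definition star_sound :: "'p set \<Rightarrow> 't set \<Rightarrow> ('p, 't) node rel \<Rightarrow> 'p set \<Rightarrow> 'p set \<Rightarrow> bool" where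
  "star_sound P T F In Out \<longleftrightarrow> (\<forall>k\<ge>1. k_sound k P T F In Out)"

definition sub_sound :: "'p set \<Rightarrow> 't set \<Rightarrow> ('p, 't) node rel \<Rightarrow> 'p set \<Rightarrow> 'p set \<Rightarrow> bool" where
  "sub_sound P T F In Out \<longleftrightarrow>
     (\<forall>k k' m'. k' \<le> k \<longrightarrow> reach T F (kcopies k In) (m' + kcopies k' Out) \<longrightarrow>
        reach T F m' (kcopies (k - k') Out))"

end

theory Submission
  imports Defs
begin

lemma pre_disj:
  assumes "\<forall>p\<in>Out. {x. (Place p, x) \<in> F} = {}" "p \<in># preset F t"
  shows "p \<notin> Out"
proof
  assume "p \<in> Out"
  have "p \<in> {p. (Place p, Trans t) \<in> F}"
    using assms(2) unfolding preset_def
    by (metis elem_mset_set empty_iff finite_set_mset_mset_set set_mset_empty mset_set.infinite)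
  then show False using assms(1) \<open>p \<in> Out\<close> by auto
qed

lemma reach_strip:
  assumes out: "\<forall>p\<in>Out. {x. (Place p, x) \<in> F} = {}"
    and r: "reach T F (m + x) m2" and xs: "set_mset x \<subseteq> Out"
  shows "\<exists>m3. m2 = m3 + x \<and> reach T F m m3"
  using r[unfolded reach_def]
proof (induction rule: rtranclp_induct)
  case base
  then show ?case by (auto simp: reach_def)
next
  case (step y z)
  then obtain m3 where y: "y = m3 + x" and rm: "reach T F m m3" by blast
  from step(2) obtain t where t: "t \<in> T" "preset F t \<subseteq># y"
    and z: "z = y - preset F t + postset F t" unfolding fire_step_def by blast
  have sub: "preset F t \<subseteq># m3"
    unfolding subseteq_mset_def
  proof
    fix p
    show "count (preset F t) p \<le> count m3 p"
    proof (cases "count (preset F t) p = 0")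
      case False
      then have "p \<notin> Out" using pre_disj[OF out] by (simp add: count_eq_zero_iff)
      then have "count x p = 0" using xs by (auto simp: count_eq_zero_iff)
      then show ?thesis using t(2) y by (metis add.right_neutral count_union mset_subset_eq_count)
    qed simp
  qed
  have "z = (m3 - preset F t + postset F t) + x"
    unfolding multiset_eq_iff
  proof
    fix a
    have "count (preset F t) a \<le> count m3 a" using sub by (simp add: subseteq_mset_def)
    then show "count z a = count (m3 - preset F t + postset F t + x) a"
      using z y by simp
  qed
  moreover have "reach T F m (m3 - preset F t + postset F t)"
  proof -
    have "fire_step T F m3 (m3 - preset F t + postset F t)"
      using sub t(1) unfolding fire_step_def by blast
    then show ?thesis using rm unfolding reach_def by (rule rtranclp.rtrancl_into_rtrancl[rotated])
  qed
  ultimately show ?case by blast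
qed

lemma reach_zero:
  assumes "reach T F 0 m"
    and ne: "\<forall>t\<in>T. preset F t \<noteq> 0"
  shows "m = 0"
  using assms(1)[unfolded reach_def]
proof (induction rule: rtranclp_induct)
  case base then show ?case by simp
next
  case (step y z)
  then show ?case using ne unfolding fire_step_def by auto
qed

theorem mainTheorem6:
  fixes P :: "'p set" and T :: "'t set" and F :: "('p, 't) node rel" and In Out :: "'p set"
  assumes "pWF P T F In Out"
    and "\<forall>p\<in>Out. {x. (Place p, x) \<in> F} = {}"
  shows "star_sound P T F In Out \<longleftrightarrow> sub_sound P T F In Out"
proof
  assume "sub_sound P T F In Out"
  then show "star_sound P T F In Out"
    unfolding sub_sound_def star_sound_def k_sound_def
    by (metis add.right_neutral kcopies_def diff_zero repeat_mset_0 zero_le)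
next
  assume ss: "star_sound P T F In Out"
  have pn: "petri_net P T F" using assms(1) unfolding pWF_def by blast
  have ne: "\<forall>t\<in>T. preset F t \<noteq> 0"
  proof
    fix t assume tT: "t \<in> T"
    then have "Trans t \<in> nodes P T" by (simp add: nodes_def)
    then obtain i where "(Place i, Trans t) \<in> F\<^sup>*" using assms(1) unfolding pWF_def by blast
    then obtain y where "(y, Trans t) \<in> F" by (cases rule: rtranclE) auto
    then obtain p where pF: "(Place p, Trans t) \<in> F" and "p \<in> P"
      using pn unfolding petri_net_def by auto
    have fin: "finite {p. (Place p, Trans t) \<in> F}"
      using pn unfolding petri_net_def
      by (rule_tac finite_subset[of _ P]) auto
    show "preset F t \<noteq> 0" unfolding preset_def using fin pF
      by (metis empty_iff mem_Collect_eq mset_set_empty_iff)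
  qed
  show "sub_sound P T F In Out"
    unfolding sub_sound_def
  proof (intro allI impI)
    fix k k' m'
    assume kk: "k' \<le> k" and r: "reach T F (kcopies k In) (m' + kcopies k' Out)"
    show "reach T F m' (kcopies (k - k') Out)"
    proof (cases "k = 0")
      case True
      then have "k' = 0" using kk by simp
      then have "m' = 0" using r reach_zero[OF _ ne] True by (simp add: kcopies_def)
      then show ?thesis using True by (simp add: kcopies_def reach_def)
    next
      case False
      then have "k_sound k P T F In Out" using ss unfolding star_sound_def by simp
      then have "reach T F (m' + kcopies k' Out) (kcopies k Out)"
        using r unfolding k_sound_def by blast
      moreover have "set_mset (kcopies k' Out) \<subseteq> Out"
        unfolding kcopies_def
        by (metis elem_mset_set empty_iff finite_set_mset_mset_set set_mset_empty mset_set.infinite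
              subsetI in_diffD count_repeat_mset count_eq_zero_iff mult_is_0)
      ultimately obtain m3 where m3: "kcopies k Out = m3 + kcopies k' Out" "reach T F m' m3"
        using reach_strip[OF assms(2)] by blast
      have "kcopies k Out = kcopies (k - k') Out + kcopies k' Out"
        using kk unfolding kcopies_def by (metis le_add_diff_inverse2 repeat_mset_distrib)
      then have "m3 = kcopies (k - k') Out" using m3(1) by simp
      then show ?thesis using m3(2) by simp
    qed
  qed
qed

end
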